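(* Let $(X,d)$ be a metric space and $\tilde x$ a sequence of points of $X$. The following are equivalent: (i) $\tilde x$ is $d$-statistically convergent; (ii) every subsequence $\tilde x'$ of $\tilde x$ with $\liminf_{n\to\infty}\frac{|K_{\tilde x'}(n)|}{n}>0$ is $d$-statistically convergent; (iii) every dense subsequence $\tilde x'$ of $\tilde x$ is $d$-statistically convergent.
   Context: A sequence $(z_k)$ in $(X,d)$ is $d$-statistically convergent to $a\in X$ if for every $\epsilon>0$, $\lim_{n\to\infty}\frac{1}{n}|\{k\le n: d(z_k,a)\ge\epsilon\}|=0$, and $d$-statistically convergent if this holds for some $a\in X$; a subsequence $(x_{n(k)})_k$ (with $(n(k))$ infinite and strictly increasing) is regarded as the sequence $k\mapsto x_{n(k)}$. For a subsequence $\tilde x'=(x_{n(k)})$, $K_{\tilde x'}=\{n(k):k\in\mathbb N\}$ and $K_{\tilde x'}(n)=\{m\in K_{\tilde x'}:m\le n\}$. A set $K\subseteq\mathbb N$ is statistical dense if $\lim_{n\to\infty}|\{k\in K:k\le n\}|/n=1$; $\tilde x'$ is a dense subsequence of $\tilde x$ if $K_{\tilde x'}$ is a statistical dense subset of $\mathbb N$. *)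

theory Defs
  imports "HOL-Analysis.Analysis" "HOL-Library.Liminf_Limsup"
begin

text \<open>Sequences are indexed from 0; the paper's index k \<le> n (k \<ge> 1) corresponds to k < n here.\<close>

definition stat_conv_to :: "(nat \<Rightarrow> 'a::metric_space) \<Rightarrow> 'a \<Rightarrow> bool" where
  "stat_conv_to z a \<longleftrightarrow>
     (\<forall>\<epsilon>>0. (\<lambda>n. real (card {k. k < n \<and> dist (z k) a \<ge> \<epsilon>}) / real n) \<longlonglongrightarrow> 0)"

definition stat_convergent :: "(nat \<Rightarrow> 'a::metric_space) \<Rightarrow> bool" where
  "stat_convergent z \<longleftrightarrow> (\<exists>a. stat_conv_to z a)"

definition count_upto :: "nat set \<Rightarrow> nat \<Rightarrow> nat" where
  "count_upto K n = card {m \<in> K. m < n}"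

definition stat_dense :: "nat set \<Rightarrow> bool" where
  "stat_dense K \<longleftrightarrow> (\<lambda>n. real (count_upto K n) / real n) \<longlonglongrightarrow> 1"

end

theory Submission
  imports Defs
begin

lemma count_range_at:
  assumes "strict_mono r"
  shows "count_upto (range r) (r n) = n"
proof -
  have "{m \<in> range r. m < r n} = r ` {..<n}"
    using assms by (auto simp: strict_mono_less)
  moreover have "inj_on r {..<n}" using assms strict_mono_imp_inj_on by blast
  ultimately show ?thesis unfolding count_upto_def by (simp add: card_image)
qed

lemma sub_conv:
  fixes x :: "nat \<Rightarrow> 'a::metric_space"
  assumes sc: "stat_conv_to x a" and r: "strict_mono r"
    and lim: "liminf (\<lambda>n. ereal (real (count_upto (range r) n) / real n)) > 0"
  shows "stat_conv_to (x \<circ> r) a"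
  unfolding stat_conv_to_def
proof (intro allI impI)
  fix e :: real assume e: "e > 0"
  define B where "B N = real (card {k. k < N \<and> dist (x k) a \<ge> e})" for N
  have B0: "(\<lambda>N. B N / real N) \<longlonglongrightarrow> 0" using sc e unfolding stat_conv_to_def B_def by auto
  have Br: "(\<lambda>n. B (r n) / real (r n)) \<longlonglongrightarrow> 0"
    using LIMSEQ_subseq_LIMSEQ[OF B0 r] by (simp add: o_def)
  obtain c where c: "0 < ereal c" "ereal c < liminf (\<lambda>n. ereal (real (count_upto (range r) n) / real n))"
    using ereal_dense2[OF lim] by blast
  hence cpos: "c > 0" by simp
  have ev: "eventually (\<lambda>N. c < real (count_upto (range r) N) / real N) sequentially"
    using less_LiminfD[OF c(2)] by simp
  then obtain N0 where N0: "\<And>N. N \<ge> N0 \<Longrightarrow> c < real (count_upto (range r) N) / real N"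
    by (auto simp: eventually_sequentially)
  have lim2: "(\<lambda>n. (1/c) * (B (r n) / real (r n))) \<longlonglongrightarrow> 0"
    using tendsto_mult[OF tendsto_const[of "1/c"] Br] by (simp only: mult_zero_right)
  show "(\<lambda>n. real (card {k. k < n \<and> e \<le> dist ((x \<circ> r) k) a}) / real n) \<longlonglongrightarrow> 0"
  proof (rule tendsto_sandwich[OF _ _ tendsto_const lim2])
    show "\<forall>\<^sub>F n in sequentially. 0 \<le> real (card {k. k < n \<and> e \<le> dist ((x \<circ> r) k) a}) / real n"
      by simp
    show "\<forall>\<^sub>F n in sequentially. real (card {k. k < n \<and> e \<le> dist ((x \<circ> r) k) a}) / real n
          \<le> 1 / c * (B (r n) / real (r n))"
      unfolding eventually_sequentially
    proof (intro exI[of _ "Suc N0"] allI impI)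
      fix n assume n: "Suc N0 \<le> n"
      have rn: "r n \<ge> n" using seq_suble[OF r] by simp
      have cnt: "c < real n / real (r n)"
        using N0[of "r n"] n rn count_range_at[OF r, of n] by simp
      have rpos: "real (r n) > 0" using rn n by simp
      have npos: "real n > 0" using n by simp
      have "r ` {k. k < n \<and> e \<le> dist ((x \<circ> r) k) a} \<subseteq> {k. k < r n \<and> dist (x k) a \<ge> e}"
        using r by (auto simp: strict_mono_less)
      hence "card (r ` {k. k < n \<and> e \<le> dist ((x \<circ> r) k) a}) \<le> card {k. k < r n \<and> dist (x k) a \<ge> e}"
        by (intro card_mono) auto
      moreover have "card (r ` {k. k < n \<and> e \<le> dist ((x \<circ> r) k) a}) = card {k. k < n \<and> e \<le> dist ((x \<circ> r) k) a}"
        using strict_mono_imp_inj_on[OF r] by (intro card_image) (auto intro: inj_on_subset)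
      ultimately have A: "real (card {k. k < n \<and> e \<le> dist ((x \<circ> r) k) a}) \<le> B (r n)"
        unfolding B_def by simp
      have Bnn: "B (r n) \<ge> 0" unfolding B_def by simp
      have "real (card {k. k < n \<and> e \<le> dist ((x \<circ> r) k) a}) / real n \<le> B (r n) / real n"
        using A npos by (simp add: divide_right_mono)
      also have "\<dots> \<le> 1 / c * (B (r n) / real (r n))"
      proof -
        have "c * real (r n) < real n" using cnt rpos by (simp add: field_simps)
        hence "B (r n) * (c * real (r n)) \<le> B (r n) * real n" using Bnn by (simp add: mult_left_mono)
        thus ?thesis using cpos rpos npos by (simp add: field_simps)
      qed
      finally show "real (card {k. k < n \<and> e \<le> dist ((x \<circ> r) k) a}) / real n
          \<le> 1 / c * (B (r n) / real (r n))" .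
    qed
  qed
qed

lemma count_id: "count_upto (range id) n = n"
  unfolding count_upto_def by simp

lemma ratio_id: "(\<lambda>n. real (count_upto (range id) n) / real n) \<longlonglongrightarrow> 1"
proof (rule Lim_transform_eventually[OF tendsto_const])
  show "\<forall>\<^sub>F n in sequentially. 1 = real (count_upto (range id) n) / real n"
    unfolding eventually_sequentially count_id by (intro exI[of _ 1]) auto
qed

lemma liminf_pos_of_dense:
  assumes "(\<lambda>n. real (count_upto K n) / real n) \<longlonglongrightarrow> 1"
  shows "liminf (\<lambda>n. ereal (real (count_upto K n) / real n)) > 0"
proof -
  have "(\<lambda>n. ereal (real (count_upto K n) / real n)) \<longlonglongrightarrow> ereal 1"
    using assms by (rule tendsto_ereal)
  hence "liminf (\<lambda>n. ereal (real (count_upto K n) / real n)) = ereal 1"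
    by (rule lim_imp_Liminf[OF trivial_limit_sequentially])
  thus ?thesis by simp
qed

theorem theorem5:
  fixes x :: "nat \<Rightarrow> 'a::metric_space"
  shows "(stat_convergent x
            \<longleftrightarrow> (\<forall>r. strict_mono r
                   \<and> liminf (\<lambda>n. ereal (real (count_upto (range r) n) / real n)) > 0
                   \<longrightarrow> stat_convergent (x \<circ> r)))
       \<and> (stat_convergent x
            \<longleftrightarrow> (\<forall>r. strict_mono r \<and> stat_dense (range r)
                   \<longrightarrow> stat_convergent (x \<circ> r)))"
proof -
  have idm: "strict_mono (id::nat\<Rightarrow>nat)" by (simp add: strict_mono_def)
  have idl: "liminf (\<lambda>n. ereal (real (count_upto (range id) n) / real n)) > 0"
    using liminf_pos_of_dense[OF ratio_id] .
  have idd: "stat_dense (range id)" unfolding stat_dense_def using ratio_id .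
  have A: "stat_convergent x \<Longrightarrow> strict_mono r \<Longrightarrow>
     liminf (\<lambda>n. ereal (real (count_upto (range r) n) / real n)) > 0 \<Longrightarrow>
     stat_convergent (x \<circ> r)" for r :: "nat \<Rightarrow> nat"
    unfolding stat_convergent_def using sub_conv by blast
  have B: "stat_convergent (x \<circ> id) \<Longrightarrow> stat_convergent x" by simp
  show ?thesis
  proof (intro conjI iffI allI impI)
    show "stat_convergent x" if "\<forall>r. strict_mono r \<and> 0 < liminf (\<lambda>n. ereal (real (count_upto (range r) n) / real n)) \<longrightarrow> stat_convergent (x \<circ> r)"
      using that idm idl B by blast
    show "stat_convergent x" if "\<forall>r. strict_mono r \<and> stat_dense (range r) \<longrightarrow> stat_convergent (x \<circ> r)"
      using that idm idd B by blast
  next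
    fix r :: "nat \<Rightarrow> nat" assume "stat_convergent x" "strict_mono r \<and> 0 < liminf (\<lambda>n. ereal (real (count_upto (range r) n) / real n))"
    thus "stat_convergent (x \<circ> r)" using A by blast
  next
    fix r :: "nat \<Rightarrow> nat" assume "stat_convergent x" "strict_mono r \<and> stat_dense (range r)"
    thus "stat_convergent (x \<circ> r)" using A liminf_pos_of_dense unfolding stat_dense_def by blast
  qed
qed

end
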